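(* Let $(\mathcal A,\mathcal T,(-),\preceq)$ be a $\mathcal T$-system such that $(\mathcal A,\mathcal T,(-))$ is a meta-tangible $\mathcal T$-monoid module triple and $\mathcal A$ has height $2$. Then the system is strongly negated: for all $c,d\in\mathcal A$ with $\mathbb 0\preceq c+d$, either ($\mathbb 0\preceq c$ and $\mathbb 0\preceq d$), or $(-)c\preceq d$, or $(-)d\preceq c$.
   Context: $(\mathcal A,+,\mathbb 0)$ commutative monoid, $\mathcal T\subseteq\mathcal A\setminus\{\mathbb 0\}$. A negation map is $(-):\mathcal A\to\mathcal A$ with $(-)(b_1+b_2)=(-)b_1+(-)b_2$, $(-)((-)b)=b$, $(-)\mathbb 0=\mathbb 0$, $(-)\mathcal T\subseteq\mathcal T$. Write $b(-)c:=b+((-)c)$, $b^\circ:=b(-)b$, $\mathcal A^\circ=\{b^\circ:b\in\mathcal A\}$. A $\mathcal T$-triple $(\mathcal A,\mathcal T,(-))$: such data with an action $\mathcal T\times\mathcal A\to\mathcal A$ satisfying $a(b_1+b_2)=ab_1+ab_2$, $a\mathbb 0=\mathbb 0$, $(-)(ab)=((-)a)b=a((-)b)$, with $\mathcal T\cap\mathcal A^\circ=\emptyset$ and every element of $\mathcal A$ a finite sum of elements of $\mathcal T$. It is a $\mathcal T$-monoid module triple if moreover $\mathcal T$ is a monoid with identity $\mathbb 1$ whose multiplication is the restriction of the action, $\mathbb 1b=b$ and $(a_1a_2)b=a_1(a_2b)$. Meta-tangible: $a+b\in\mathcal T$ for all $a,b\in\mathcal T$ with $b\neq(-)a$. A $\mathcal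 T$-surpassing relation $\preceq$ is a reflexive transitive relation on $\mathcal A$ with: (i) $b\preceq b+c^\circ$ for all $b,c$; (ii) $b_1\preceq b_2\Rightarrow(-)b_1\preceq(-)b_2$; (iii) $b_1\preceq b_2,\ b_1'\preceq b_2'\Rightarrow b_1+b_1'\preceq b_2+b_2'$; (iv) $a\in\mathcal T$, $b_1\preceq b_2\Rightarrow ab_1\preceq ab_2$; (v) $a\preceq b$ with $a,b\in\mathcal T$ implies $a=b$; (vi) $b^\circ\not\preceq a$ for all $b\in\mathcal A$, $a\in\mathcal T$. A $\mathcal T$-system is $(\mathcal A,\mathcal T,(-),\preceq)$ with $(\mathcal A,\mathcal T,(-))$ a $\mathcal T$-triple, $\preceq$ a $\mathcal T$-surpassing relation, and such that $\mathbb 0\preceq a+b$ with $a,b\in\mathcal T$ implies $b=(-)a$. Height of $c$: least $t$ with $c=\sum_{i=1}^ta_i$, $a_i\in\mathcal T$; height of $\mathcal A$: supremum over its elements. *)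

theory Defs
  imports Main "HOL-Library.Extended_Nat"
begin

text \<open>The ambient commutative monoid (A,+,0) is the type 'a (class comm_monoid_add);
  T is a subset, neg the negation map, act the action T x A -> A (only its values
  for first argument in T matter), rel the surpassing relation.\<close>

definition circ :: "('a::comm_monoid_add \<Rightarrow> 'a) \<Rightarrow> 'a \<Rightarrow> 'a" where
  "circ neg b = b + neg b"

definition negation_map :: "'a::comm_monoid_add set \<Rightarrow> ('a \<Rightarrow> 'a) \<Rightarrow> bool" where
  "negation_map T neg \<longleftrightarrow>
     (\<forall>b1 b2. neg (b1 + b2) = neg b1 + neg b2) \<and>
     (\<forall>b. neg (neg b) = b) \<and> neg 0 = 0 \<and> neg ` T \<subseteq> T"

definition T_triple :: "'a::comm_monoid_add set \<Rightarrow> ('a \<Rightarrow> 'a) \<Rightarrow> ('a \<Rightarrow> 'a \<Rightarrow> 'a) \<Rightarrow> bool" where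
  "T_triple T neg act \<longleftrightarrow>
     T \<subseteq> UNIV - {0} \<and> negation_map T neg \<and>
     (\<forall>a\<in>T. \<forall>b1 b2. act a (b1 + b2) = act a b1 + act a b2) \<and>
     (\<forall>a\<in>T. act a 0 = 0) \<and>
     (\<forall>a\<in>T. \<forall>b. neg (act a b) = act (neg a) b \<and> neg (act a b) = act a (neg b)) \<and>
     T \<inter> range (circ neg) = {} \<and>
     (\<forall>c. \<exists>xs. set xs \<subseteq> T \<and> sum_list xs = c)"

definition T_monoid_module_triple ::
  "'a::comm_monoid_add set \<Rightarrow> ('a \<Rightarrow> 'a) \<Rightarrow> ('a \<Rightarrow> 'a \<Rightarrow> 'a) \<Rightarrow> bool" where
  "T_monoid_module_triple T neg act \<longleftrightarrow>
     T_triple T neg act \<and>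
     (\<forall>a1\<in>T. \<forall>a2\<in>T. act a1 a2 \<in> T) \<and>
     (\<exists>one\<in>T. (\<forall>a\<in>T. act a one = a) \<and> (\<forall>b. act one b = b)) \<and>
     (\<forall>a1\<in>T. \<forall>a2\<in>T. \<forall>b. act (act a1 a2) b = act a1 (act a2 b))"

definition meta_tangible :: "'a::comm_monoid_add set \<Rightarrow> ('a \<Rightarrow> 'a) \<Rightarrow> bool" where
  "meta_tangible T neg \<longleftrightarrow> (\<forall>a\<in>T. \<forall>b\<in>T. b \<noteq> neg a \<longrightarrow> a + b \<in> T)"

definition T_surpassing ::
  "'a::comm_monoid_add set \<Rightarrow> ('a \<Rightarrow> 'a) \<Rightarrow> ('a \<Rightarrow> 'a \<Rightarrow> 'a) \<Rightarrow> ('a \<Rightarrow> 'a \<Rightarrow> bool) \<Rightarrow> bool" where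
  "T_surpassing T neg act rel \<longleftrightarrow>
     reflp rel \<and> transp rel \<and>
     (\<forall>b c. rel b (b + circ neg c)) \<and>
     (\<forall>b1 b2. rel b1 b2 \<longrightarrow> rel (neg b1) (neg b2)) \<and>
     (\<forall>b1 b2 b1' b2'. rel b1 b2 \<longrightarrow> rel b1' b2' \<longrightarrow> rel (b1 + b1') (b2 + b2')) \<and>
     (\<forall>a\<in>T. \<forall>b1 b2. rel b1 b2 \<longrightarrow> rel (act a b1) (act a b2)) \<and>
     (\<forall>a\<in>T. \<forall>b\<in>T. rel a b \<longrightarrow> a = b) \<and>
     (\<forall>b. \<forall>a\<in>T. \<not> rel (circ neg b) a)"

definition T_system ::
  "'a::comm_monoid_add set \<Rightarrow> ('a \<Rightarrow> 'a) \<Rightarrow> ('a \<Rightarrow> 'a \<Rightarrow> 'a) \<Rightarrow> ('a \<Rightarrow> 'a \<Rightarrow> bool) \<Rightarrow> bool" where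
  "T_system T neg act rel \<longleftrightarrow>
     T_triple T neg act \<and> T_surpassing T neg act rel \<and>
     (\<forall>a\<in>T. \<forall>b\<in>T. rel 0 (a + b) \<longrightarrow> b = neg a)"

definition elem_height :: "'a::comm_monoid_add set \<Rightarrow> 'a \<Rightarrow> nat" where
  "elem_height T c = (LEAST t. \<exists>xs. length xs = t \<and> set xs \<subseteq> T \<and> sum_list xs = c)"

definition height :: "'a::comm_monoid_add set \<Rightarrow> enat" where
  "height T = (SUP c. enat (elem_height T c))"

definition strongly_negated :: "('a::comm_monoid_add \<Rightarrow> 'a) \<Rightarrow> ('a \<Rightarrow> 'a \<Rightarrow> bool) \<Rightarrow> bool" where
  "strongly_negated neg rel \<longleftrightarrow>
     (\<forall>c d. rel 0 (c + d) \<longrightarrow> (rel 0 c \<and> rel 0 d) \<or> rel (neg c) d \<or> rel (neg d) c)"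

end

theory Submission
  imports Defs
begin

lemma height_decomp:
  fixes T :: "'a::comm_monoid_add set"
  assumes h: "height T = 2" and ex: "\<forall>c. \<exists>xs. set xs \<subseteq> T \<and> sum_list xs = c"
  shows "c = 0 \<or> c \<in> T \<or> (\<exists>a\<in>T. \<exists>b\<in>T. c = a + b)"
proof -
  have "enat (elem_height T c) \<le> height T"
    unfolding height_def by (rule SUP_upper) simp
  with h have le: "elem_height T c \<le> 2"
    by (simp add: numeral_eq_enat)
  from ex obtain ys where "set ys \<subseteq> T \<and> sum_list ys = c" by blast
  hence "\<exists>t xs. length xs = t \<and> set xs \<subseteq> T \<and> sum_list xs = c" by blast
  hence "\<exists>xs. length xs = elem_height T c \<and> set xs \<subseteq> T \<and> sum_list xs = c"
    unfolding elem_height_def by (rule LeastI_ex)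
  then obtain xs where xs: "length xs \<le> 2" "set xs \<subseteq> T" "sum_list xs = c"
    using le by (metis order_refl)
  show ?thesis
  proof (cases xs)
    case Nil then show ?thesis using xs by simp
  next
    case (Cons a r)
    show ?thesis
    proof (cases r)
      case Nil then show ?thesis using xs Cons by simp
    next
      case (Cons b r')
      then have "r' = []" using xs \<open>xs = a # r\<close> by simp
      then show ?thesis using xs Cons \<open>xs = a # r\<close> by auto
    qed
  qed
qed

theorem proposition7p41:
  fixes T :: "'a::comm_monoid_add set" and neg :: "'a \<Rightarrow> 'a"
    and act :: "'a \<Rightarrow> 'a \<Rightarrow> 'a" and rel :: "'a \<Rightarrow> 'a \<Rightarrow> bool"
  assumes "T_system T neg act rel"
    and "T_monoid_module_triple T neg act"
    and "meta_tangible T neg"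
    and "height T = 2"
  shows "strongly_negated neg rel"
proof -
  from assms have TT: "T_triple T neg act" and SU: "T_surpassing T neg act rel"
    and sys: "\<forall>a\<in>T. \<forall>b\<in>T. rel 0 (a + b) \<longrightarrow> b = neg a"
    unfolding T_system_def by auto
  from TT have T0: "0 \<notin> T" unfolding T_triple_def by auto
  from TT have nm: "negation_map T neg" unfolding T_triple_def by auto
  have nadd: "\<And>x y. neg (x + y) = neg x + neg y" using nm unfolding negation_map_def by auto
  have ninv: "\<And>x. neg (neg x) = x" using nm unfolding negation_map_def by auto
  have nT: "\<And>x. x \<in> T \<Longrightarrow> neg x \<in> T" using nm unfolding negation_map_def by auto
  have n0: "neg 0 = 0" using nm unfolding negation_map_def by auto
  have actadd: "\<And>a x y. a \<in> T \<Longrightarrow> act a (x + y) = act a x + act a y"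
    using TT unfolding T_triple_def by auto
  have actneg: "\<And>a b. a \<in> T \<Longrightarrow> act (neg a) b = neg (act a b)"
    using TT unfolding T_triple_def by auto
  have Tcirc: "\<And>x. circ neg x \<notin> T" using TT unfolding T_triple_def by auto
  have ex: "\<forall>c. \<exists>xs. set xs \<subseteq> T \<and> sum_list xs = c" using TT unfolding T_triple_def by auto
  have refl: "\<And>x. rel x x" using SU unfolding T_surpassing_def reflp_def by auto
  have ri: "\<And>b c. rel b (b + circ neg c)" using SU unfolding T_surpassing_def by auto
  have rvi: "\<And>b a. a \<in> T \<Longrightarrow> \<not> rel (circ neg b) a" using SU unfolding T_surpassing_def by auto
  have c0: "circ neg 0 = 0" by (simp add: circ_def n0)
  have r0T: "\<And>a. a \<in> T \<Longrightarrow> \<not> rel 0 a" using rvi[of _ 0] c0 by metis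
  have meta: "\<And>a b. a \<in> T \<Longrightarrow> b \<in> T \<Longrightarrow> a + b \<notin> T \<Longrightarrow> b = neg a"
    using assms(3) unfolding meta_tangible_def by blast
  obtain one where one: "one \<in> T" "\<And>a. a \<in> T \<Longrightarrow> act a one = a" "\<And>b. act one b = b"
    using assms(2) unfolding T_monoid_module_triple_def by blast
  have actT: "\<And>a b. a \<in> T \<Longrightarrow> b \<in> T \<Longrightarrow> act a b \<in> T"
    using assms(2) unfolding T_monoid_module_triple_def by blast
  have dec: "\<And>c. c = 0 \<or> c \<in> T \<or> (\<exists>a\<in>T. c = circ neg a)"
  proof -
    fix c
    have "c = 0 \<or> c \<in> T \<or> (\<exists>a\<in>T. \<exists>b\<in>T. c = a + b)"
      by (rule height_decomp[OF assms(4) ex])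
    then show "c = 0 \<or> c \<in> T \<or> (\<exists>a\<in>T. c = circ neg a)"
      using meta unfolding circ_def by blast
  qed
  have K: "rel (neg c) (circ neg b)" if cT: "c \<in> T" and bT: "b \<in> T" and r: "rel 0 (c + circ neg b)" for c b
  proof -
    have nt: "c + circ neg b \<notin> T" using r r0T by blast
    show ?thesis
    proof (cases "b = neg c")
      case False
      have cbT: "c + b \<in> T" using meta[OF cT bT] False by blast
      have "c + circ neg b = (c + b) + neg b" by (simp add: circ_def add.assoc)
      hence "neg b = neg (c + b)" using meta[OF cbT nT[OF bT]] nt by metis
      hence "b = c + b" using ninv by metis
      hence "neg b = neg c + neg b" using nadd by metis
      hence "neg c + circ neg b = circ neg b" unfolding circ_def
        by (metis add.assoc add.commute)
      then show ?thesis using ri[of "neg c" b] by simp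
    next
      case True
      have cb: "circ neg b = circ neg c" using True ninv unfolding circ_def by (simp add: add.commute)
      show ?thesis
      proof (cases "c = neg c")
        case False
        have ccT: "c + c \<in> T" using meta[OF cT cT] False by blast
        have "c + circ neg c = (c + c) + neg c" by (simp add: circ_def add.assoc)
        hence "neg c = neg (c + c)" using meta[OF ccT nT[OF cT]] nt cb by metis
        hence "neg c = neg c + neg c" using nadd by metis
        hence "neg c + circ neg c = circ neg c" unfolding circ_def
          by (metis add.assoc add.commute)
        then show ?thesis using ri[of "neg c" c] cb by simp
      next
        case True
        have circc: "circ neg c = c + c" using True unfolding circ_def by metis
        have n1: "neg one = one"
        proof (rule ccontr)
          assume "neg one \<noteq> one"
          hence "one + one \<in> T" using meta[OF one(1) one(1)] by metis
          hence "act c (one + one) \<in> T" using actT cT by blast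
          moreover have "act c (one + one) = circ neg c" using actadd[OF cT] one(2)[OF cT] circc by simp
          ultimately show False using Tcirc by simp
        qed
        have nid: "\<And>x. neg x = x"
        proof -
          fix x
          have "neg x = neg (act one x)" using one(3) by simp
          also have "\<dots> = act (neg one) x" using actneg[OF one(1)] by simp
          also have "\<dots> = x" using n1 one(3) by simp
          finally show "neg x = x" .
        qed
        have ci: "\<And>x. circ neg x = x + x" using nid unfolding circ_def by simp
        define s where "s = one + one + one"
        have acts: "\<And>a. a \<in> T \<Longrightarrow> act a s = a + a + a" using actadd one(2) unfolding s_def by simp
        have s3: "s = one + one"
        proof -
          have sT: "s \<notin> T"
          proof
            assume "s \<in> T"
            hence "act c s \<in> T" using actT cT by blast
            moreover have "act c s = c + circ neg b" using acts[OF cT] cb circc by (simp add: add.assoc)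
            ultimately show False using nt by simp
          qed
          have s0: "s \<noteq> 0"
          proof
            assume "s = 0"
            hence "one = one + s" by simp
            also have "\<dots> = circ neg (one + one)" unfolding s_def ci by (simp add: add_ac)
            finally show False using one(1) Tcirc by metis
          qed
          from dec[of s] sT s0 obtain y where yT: "y \<in> T" and sy: "s = circ neg y" by blast
          hence sy2: "s = y + y" using ci by simp
          show ?thesis
          proof (cases "y = one")
            case True then show ?thesis using sy2 by simp
          next
            case False
            have oyT: "one + y \<in> T" using meta[OF one(1) yT] False nid by metis
            have "(one + y) + y = s + one" using sy2 by (simp add: add_ac)
            also have "\<dots> = circ neg (one + one)" unfolding s_def ci by (simp add: add_ac)
            finally have "(one + y) + y \<notin> T" using Tcirc by metis
            hence "y = one + y" using meta[OF oyT yT] nid by metis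
            hence "s + y = y" unfolding s_def by (metis add.assoc)
            hence "y = y + y + y" using sy2 by (simp add: add.assoc)
            also have "\<dots> = act y s" using acts[OF yT] by simp
            also have "\<dots> = circ neg (act y y)" using sy2 actadd[OF yT] ci by simp
            finally show ?thesis using yT Tcirc by metis
          qed
        qed
        have "c + c + c = c + c" using acts[OF cT] actadd[OF cT] one(2)[OF cT] s3 by simp
        hence "c + circ neg c = circ neg c" using circc by (simp add: add.assoc)
        then show ?thesis using ri[of c c] cb True by simp
      qed
    qed
  qed
  show ?thesis unfolding strongly_negated_def
  proof (intro allI impI)
    fix c d assume r: "rel 0 (c + d)"
    have rc: "\<And>a. rel 0 (circ neg a)" using ri[of 0] by simp
    show "rel 0 c \<and> rel 0 d \<or> rel (neg c) d \<or> rel (neg d) c"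
    proof -
      consider "c = 0" | "d = 0" | "c \<in> T" "d \<in> T" | "\<exists>a. c = circ neg a" "\<exists>b. d = circ neg b"
        | "c \<in> T" "\<exists>b\<in>T. d = circ neg b" | "d \<in> T" "\<exists>b\<in>T. c = circ neg b"
        using dec[of c] dec[of d] by blast
      then show ?thesis
      proof cases
        case 1 then show ?thesis using r refl by simp
      next
        case 2 then show ?thesis using r refl by simp
      next
        case 3 then show ?thesis using sys r refl by metis
      next
        case 4 then show ?thesis using rc by blast
      next
        case 5 then show ?thesis using K r by blast
      next
        case 6 then obtain b where "b \<in> T" "c = circ neg b" by blast
        then show ?thesis using K[of d b] r 6 by (simp add: add.commute)
      qed
    qed
  qed
qed

end
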